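(* Let $f:(0,1)\to(0,1)$ be of the form $f(p)=1-\sum_{k=1}^\infty c_k(1-p)^k$ with $c_k\ge0$ and $\sum_k c_k=1$, and let $p\in(0,1)$. Algorithm 2 (described below), applied to i.i.d. Bernoulli($p$) inputs, uses a total number $N$ of inputs with $$\mathbb E[N]=\frac{f(p)}{p}\left(1+\frac{2}{p(1-p)}\right),$$ and there exist $A>0$, $\beta<1$ with $\Pr[N>n]\le A\beta^n$ for all $n$ (i.e. the algorithm is fast).
   Context: Let $d_k=c_k/(1-\sum_{j=1}^{k-1}c_j)\in[0,1]$ (if $c_K>0$ and $c_k=0$ for $k>K$, then $d_K=1$ and later $d_k$ are not needed). Write each $d_k$ in binary as $0.b_1b_2b_3\cdots$ with infinitely many fractional digits (so $1=0.111\cdots$). Algorithm 2 uses only the input sequence $X_1,X_2,\dots$ (i.i.d. Bernoulli($p$)), taken in order: set $i=1$. (2) Take one input, call it $X_i$. (3) Generate $V_i$ as follows: set $j=1$; (3.2) keep taking pairs of inputs until the two values in a pair differ, and let $T$ be the first value of that pair; (3.3) if $T=0$, increase $j$ and return to (3.2); otherwise set $V_i$ equal to the $j$-th fractional binary digit of $d_i$. (4) If $V_i=1$ or $X_i=1$, output $Y=X_i$ and stop; otherwise increase $i$ and return to (2). $N$ is the total number of inputs consumed in all steps. *)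

theory Defs
  imports "HOL-Probability.Probability"
begin

text \<open>Coefficients are indexed from 1 as in the paper: c 1, c 2, ... (c 0 is unused).
  d_k = c_k / (1 - sum_{j=1}^{k-1} c_j).\<close>
definition dcoef :: "(nat \<Rightarrow> real) \<Rightarrow> nat \<Rightarrow> real" where
  "dcoef c k = c k / (1 - (\<Sum>j\<in>{1..<k}. c j))"

text \<open>The j-th fractional binary digit (j \<ge> 1) of x in [0,1], using the expansion with
  infinitely many 1 digits when x > 0 (so 1 = 0.111...), and all digits 0 for x = 0.\<close>
definition bin_digit :: "real \<Rightarrow> nat \<Rightarrow> int" where
  "bin_digit x j = (if x \<le> 0 then 0 else (\<lceil>2 ^ j * x\<rceil> - 1) mod 2)"

text \<open>States of Algorithm 2. The last nat component is always the number of inputs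
  consumed so far (i.e. the position of the next input to be read).
  Start i pos: about to take X_i (step 2).
  Gen i j x pos: generating V_i, current digit index j, with X_i = x (step 3.2).\<close>
datatype alg_state = Start nat nat | Gen nat nat bool nat | Halt bool nat

fun alg_step :: "(nat \<Rightarrow> real) \<Rightarrow> (nat \<Rightarrow> bool) \<Rightarrow> alg_state \<Rightarrow> alg_state" where
  "alg_step c \<omega> (Start i pos) = Gen i 1 (\<omega> pos) (Suc pos)"
| "alg_step c \<omega> (Gen i j x pos) =
     (if \<omega> pos = \<omega> (Suc pos) then Gen i j x (pos + 2)
      else if \<not> \<omega> pos then Gen i (Suc j) x (pos + 2)
      else if bin_digit (dcoef c i) j = 1 \<or> x then Halt x (pos + 2)
      else Start (Suc i) (pos + 2))"
| "alg_step c \<omega> (Halt y pos) = Halt y pos"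

fun is_halt :: "alg_state \<Rightarrow> bool" where
  "is_halt (Halt _ _) = True"
| "is_halt _ = False"

fun consumed :: "alg_state \<Rightarrow> nat" where
  "consumed (Start _ pos) = pos"
| "consumed (Gen _ _ _ pos) = pos"
| "consumed (Halt _ pos) = pos"

definition alg_run :: "(nat \<Rightarrow> real) \<Rightarrow> (nat \<Rightarrow> bool) \<Rightarrow> nat \<Rightarrow> alg_state" where
  "alg_run c \<omega> n = (alg_step c \<omega> ^^ n) (Start 1 0)"

definition num_inputs :: "(nat \<Rightarrow> real) \<Rightarrow> (nat \<Rightarrow> bool) \<Rightarrow> enat" where
  "num_inputs c \<omega> =
     (if \<exists>n. is_halt (alg_run c \<omega> n)
      then enat (consumed (alg_run c \<omega> (LEAST n. is_halt (alg_run c \<omega> n))))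
      else \<infinity>)"

text \<open>The i.i.d. Bernoulli(p) input sequence X_1, X_2, ... (stored at positions 0,1,...).\<close>
definition bern_seq :: "real \<Rightarrow> (nat \<Rightarrow> bool) measure" where
  "bern_seq p = PiM UNIV (\<lambda>_. measure_pmf (bernoulli_pmf p))"

end

theory Submission
  imports Defs
begin

lemma bern_decomp:
  fixes p :: real
  assumes [measurable]: "F \<in> borel_measurable (bern_seq p)"
  shows "(\<integral>\<^sup>+\<omega>. F \<omega> \<partial>bern_seq p) = (\<integral>\<^sup>+x. (\<integral>\<^sup>+\<omega>. F (case_nat x \<omega>) \<partial>bern_seq p) \<partial>measure_pmf (bernoulli_pmf p))"
proof -
  let ?M = "measure_pmf (bernoulli_pmf p)"
  interpret S: sequence_space ?M
    by unfold_locales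
  interpret P: pair_sigma_finite ?M "\<Pi>\<^sub>M i::nat\<in>UNIV. ?M" ..
  have "(\<integral>\<^sup>+\<omega>. F \<omega> \<partial>bern_seq p) = (\<integral>\<^sup>+X. F ((\<lambda>(s, \<omega>). case_nat s \<omega>) X) \<partial>(?M \<Otimes>\<^sub>M S.S))"
  proof -
    have Fm[measurable]: "F \<in> borel_measurable S.S" using assms by (simp add: bern_seq_def)
    show ?thesis unfolding bern_seq_def
      by (subst S.PiM_iter[symmetric]) (subst nn_integral_distr, measurable)
  qed
  also have "\<dots> = (\<integral>\<^sup>+x. \<integral>\<^sup>+X. F ((\<lambda>(s, \<omega>). case_nat s \<omega>) (x, X)) \<partial>S.S \<partial>?M)"
    using assms unfolding bern_seq_def by (subst S.nn_integral_fst) simp_all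
  finally show ?thesis by (simp add: bern_seq_def)
qed

lemma nn_integral_bern:
  fixes p :: real assumes "0 \<le> p" "p \<le> 1"
  shows "(\<integral>\<^sup>+x. g x \<partial>measure_pmf (bernoulli_pmf p)) = ennreal p * g True + ennreal (1-p) * g False"
  using assms by (simp add: nn_integral_measure_pmf nn_integral_count_space_finite UNIV_bool)


instance alg_state :: countable by countable_datatype

lemma comp_meas: "(\<lambda>\<omega>. \<omega> k) \<in> measurable (bern_seq p) (count_space UNIV)"
proof -
  have "(\<lambda>\<omega>. \<omega> k) \<in> measurable (bern_seq p) (measure_pmf (bernoulli_pmf p))"
    unfolding bern_seq_def by (rule measurable_component_singleton) simp
  moreover have "bern_seq p \<rightarrow>\<^sub>M measure_pmf (bernoulli_pmf p) = bern_seq p \<rightarrow>\<^sub>M count_space UNIV"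
    by (rule measurable_cong_sets) auto
  ultimately show ?thesis by simp
qed

lemma meas2: "(\<lambda>\<omega>. G (\<omega> k) (\<omega> l)) \<in> measurable (bern_seq p) (count_space UNIV)"
proof (rule measurable_compose_countable'[where g="\<lambda>\<omega>. \<omega> k" and f="\<lambda>a \<omega>. G a (\<omega> l)" and I=UNIV])
  fix a :: bool
  show "(\<lambda>\<omega>. G a (\<omega> l)) \<in> measurable (bern_seq p) (count_space UNIV)"
    by (rule measurable_compose_countable'[where g="\<lambda>\<omega>. \<omega> l" and f="\<lambda>b \<omega>. G a b" and I=UNIV])
       (auto intro: comp_meas)
qed (auto intro: comp_meas)

lemma step_meas: "(\<lambda>\<omega>. alg_step c \<omega> t) \<in> measurable (bern_seq p) (count_space UNIV)"
proof (cases t)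
  case (Start i pos)
  then show ?thesis using meas2[of "\<lambda>a b. Gen i 1 a (Suc pos)" pos pos p] by simp
next
  case (Gen i j x pos)
  then show ?thesis using meas2[of "\<lambda>a b. (if a = b then Gen i j x (pos + 2)
      else if \<not> a then Gen i (Suc j) x (pos + 2)
      else if bin_digit (dcoef c i) j = 1 \<or> x then Halt x (pos + 2)
      else Start (Suc i) (pos + 2))" pos "Suc pos" p] by simp
next
  case (Halt y pos)
  then show ?thesis by simp
qed

lemma run_meas: "(\<lambda>\<omega>. (alg_step c \<omega> ^^ n) s) \<in> measurable (bern_seq p) (count_space UNIV)"
proof (induction n)
  case 0 then show ?case by simp
next
  case (Suc n)
  have "(\<lambda>\<omega>. alg_step c \<omega> ((alg_step c \<omega> ^^ n) s)) \<in> measurable (bern_seq p) (count_space UNIV)"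
    by (rule measurable_compose_countable'[where g="\<lambda>\<omega>. (alg_step c \<omega> ^^ n) s" and f="\<lambda>t \<omega>. alg_step c \<omega> t" and I=UNIV])
      (auto intro: step_meas Suc)
  then show ?case by simp
qed

lemma fun_run_meas: "(\<lambda>\<omega>. H ((alg_step c \<omega> ^^ n) s)) \<in> measurable (bern_seq p) N"
  if "\<And>a. H a \<in> space N"
  by (rule measurable_compose_countable'[where g="\<lambda>\<omega>. (alg_step c \<omega> ^^ n) s" and f="\<lambda>t \<omega>. H t" and I=UNIV])
     (auto intro!: measurable_const that run_meas)


fun shiftpos :: "nat \<Rightarrow> alg_state \<Rightarrow> alg_state" where
  "shiftpos k (Start i pos) = Start i (pos + k)"
| "shiftpos k (Gen i j x pos) = Gen i j x (pos + k)"
| "shiftpos k (Halt y pos) = Halt y (pos + k)"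

fun rel0 :: "alg_state \<Rightarrow> alg_state" where
  "rel0 (Start i pos) = Start i 0"
| "rel0 (Gen i j x pos) = Gen i j x 0"
| "rel0 (Halt y pos) = Halt y 0"

definition nxt :: "(nat \<Rightarrow> real) \<Rightarrow> nat \<Rightarrow> nat \<Rightarrow> bool \<Rightarrow> bool \<Rightarrow> bool \<Rightarrow> alg_state" where
  "nxt c i j x a b = (if a = b then Gen i j x 0
      else if \<not> a then Gen i (Suc j) x 0
      else if bin_digit (dcoef c i) j = 1 \<or> x then Halt x 0
      else Start (Suc i) 0)"

definition Pop :: "(nat \<Rightarrow> real) \<Rightarrow> real \<Rightarrow> (alg_state \<Rightarrow> real) \<Rightarrow> alg_state \<Rightarrow> real" where
  "Pop c p G s = (case s of
      Start i _ \<Rightarrow> p * G (Gen i 1 True 0) + (1-p) * G (Gen i 1 False 0)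
    | Gen i j x _ \<Rightarrow> p * (p * G (nxt c i j x True True) + (1-p) * G (nxt c i j x True False))
          + (1-p) * (p * G (nxt c i j x False True) + (1-p) * G (nxt c i j x False False))
    | Halt y _ \<Rightarrow> G (Halt y 0))"

lemma step_shift: "alg_step c \<omega> (shiftpos k s) = shiftpos k (alg_step c (\<lambda>t. \<omega> (t + k)) s)"
  by (cases s) auto

lemma run_shift: "(alg_step c \<omega> ^^ n) (shiftpos k s) = shiftpos k ((alg_step c (\<lambda>t. \<omega> (t + k)) ^^ n) s)"
  by (induction n) (auto simp: step_shift)

lemma rel0_shift[simp]: "rel0 (shiftpos k s) = rel0 s"
  by (cases s) auto

lemma Pop_nonneg: "0 \<le> p \<Longrightarrow> p \<le> 1 \<Longrightarrow> (\<And>t. 0 \<le> G t) \<Longrightarrow> 0 \<le> Pop c p G s"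
  unfolding Pop_def by (cases s) (auto intro!: add_nonneg_nonneg mult_nonneg_nonneg)

lemma Popn_nonneg: "0 \<le> p \<Longrightarrow> p \<le> 1 \<Longrightarrow> (\<And>t. 0 \<le> G t) \<Longrightarrow> 0 \<le> (Pop c p ^^ n) G s"
  by (induction n arbitrary: s) (auto intro!: Pop_nonneg)

lemma ennreal_comb: "0 \<le> p \<Longrightarrow> p \<le> 1 \<Longrightarrow> 0 \<le> a \<Longrightarrow> 0 \<le> b \<Longrightarrow>
   ennreal p * ennreal a + ennreal (1-p) * ennreal b = ennreal (p * a + (1-p) * b)"
  by (simp add: ennreal_mult ennreal_plus)

lemma cn_meas: "(\<lambda>\<omega>. case_nat x \<omega>) \<in> bern_seq p \<rightarrow>\<^sub>M bern_seq p"
  unfolding bern_seq_def by measurable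

lemma nxt_cons[simp]: "consumed (nxt c i j x a b) = 0"
  by (simp add: nxt_def)

lemma ennreal_comb_nonneg: "0 \<le> (p::real) \<Longrightarrow> p \<le> 1 \<Longrightarrow> 0 \<le> a \<Longrightarrow> 0 \<le> b \<Longrightarrow> 0 \<le> p * a + (1-p) * b"
  using mult_nonneg_nonneg[of p a] mult_nonneg_nonneg[of "1-p" b] by linarith

lemma run_integral:
  assumes p: "0 < p" "p < 1" and phi: "\<And>t. 0 \<le> \<phi> t"
  shows "consumed s = 0 \<Longrightarrow> (\<integral>\<^sup>+\<omega>. ennreal (\<phi> (rel0 ((alg_step c \<omega> ^^ n) s))) \<partial>bern_seq p)
          = ennreal ((Pop c p ^^ n) \<phi> s)"
proof (induction n arbitrary: s)
  case 0
  interpret prob_space "bern_seq p" unfolding bern_seq_def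
    by (rule prob_space_PiM) (rule prob_space_measure_pmf)
  have "rel0 s = s" using 0 by (cases s) auto
  then show ?case by (simp add: emeasure_space_1)
next
  case (Suc n)
  let ?G = "(Pop c p ^^ n) \<phi>"
  have pl: "0 \<le> p" and pu: "p \<le> 1" using p by auto
  have Gnn: "\<And>t. 0 \<le> ?G t" using p phi by (intro Popn_nonneg) auto
  have meas: "\<And>t. (\<lambda>\<omega>. ennreal (\<phi> (rel0 ((alg_step c \<omega> ^^ n) t)))) \<in> borel_measurable (bern_seq p)"
    by (rule fun_run_meas) simp
  have IH: "\<And>t. (\<integral>\<^sup>+\<omega>. ennreal (\<phi> (rel0 ((alg_step c \<omega> ^^ n) (rel0 t)))) \<partial>bern_seq p) = ennreal (?G (rel0 t))"
    by (rule Suc.IH) (case_tac t, auto)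
  let ?K = "\<lambda>t. ennreal (\<phi> (rel0 t))"
  have KM: "\<And>t. (\<lambda>\<omega>. ?K ((alg_step c \<omega> ^^ Suc n) t)) \<in> borel_measurable (bern_seq p)"
    by (rule fun_run_meas) simp
  have IH: "\<And>t. consumed t = 0 \<Longrightarrow> (\<integral>\<^sup>+\<omega>. ?K ((alg_step c \<omega> ^^ n) t) \<partial>bern_seq p) = ennreal (?G t)"
    by (rule Suc.IH)
  show ?case
  proof (cases s)
    case (Start i pos)
    with Suc.prems have s: "s = Start i 0" by simp
    have e: "\<And>x \<omega>. (alg_step c (case_nat x \<omega>) ^^ Suc n) s = shiftpos 1 ((alg_step c \<omega> ^^ n) (Gen i 1 x 0))"
      unfolding funpow_Suc_right comp_def s using run_shift[where k=1 and s="Gen i 1 _ 0"] by simp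
    have "(\<integral>\<^sup>+\<omega>. ?K ((alg_step c \<omega> ^^ Suc n) s) \<partial>bern_seq p)
       = (\<integral>\<^sup>+x. (\<integral>\<^sup>+\<omega>. ?K ((alg_step c (case_nat x \<omega>) ^^ Suc n) s) \<partial>bern_seq p) \<partial>measure_pmf (bernoulli_pmf p))"
      by (rule bern_decomp[OF KM])
    also have "\<dots> = (\<integral>\<^sup>+x. ennreal (?G (Gen i 1 x 0)) \<partial>measure_pmf (bernoulli_pmf p))"
      by (simp only: e rel0_shift IH consumed.simps)
    also have "\<dots> = ennreal (Pop c p ?G s)"
      by (simp only: nn_integral_bern[OF pl pu] ennreal_comb[OF pl pu Gnn Gnn] s Pop_def alg_state.case)
    finally show ?thesis by simp
  next
    case (Gen i j x pos)
    with Suc.prems have s: "s = Gen i j x 0" by simp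
    have e: "\<And>a b \<omega>. (alg_step c (case_nat a (case_nat b \<omega>)) ^^ Suc n) s = shiftpos 2 ((alg_step c \<omega> ^^ n) (nxt c i j x a b))"
    proof -
      fix a b \<omega>
      have st: "alg_step c (case_nat a (case_nat b \<omega>)) s = shiftpos 2 (nxt c i j x a b)"
        by (auto simp: s nxt_def)
      have sh: "(\<lambda>t. case_nat a (case_nat b \<omega>) (t + 2)) = \<omega>" by auto
      show "?thesis a b \<omega>" by (simp only: funpow_Suc_right comp_def st run_shift sh)
    qed
    have "(\<integral>\<^sup>+\<omega>. ?K ((alg_step c \<omega> ^^ Suc n) s) \<partial>bern_seq p)
       = (\<integral>\<^sup>+a. (\<integral>\<^sup>+\<omega>. ?K ((alg_step c (case_nat a \<omega>) ^^ Suc n) s) \<partial>bern_seq p) \<partial>measure_pmf (bernoulli_pmf p))"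
      by (rule bern_decomp[OF KM])
    also have "\<dots> = (\<integral>\<^sup>+a. (\<integral>\<^sup>+b. (\<integral>\<^sup>+\<omega>. ?K ((alg_step c (case_nat a (case_nat b \<omega>)) ^^ Suc n) s) \<partial>bern_seq p) \<partial>measure_pmf (bernoulli_pmf p)) \<partial>measure_pmf (bernoulli_pmf p))"
      by (intro nn_integral_cong bern_decomp measurable_compose[OF cn_meas KM])
    also have "\<dots> = (\<integral>\<^sup>+a. (\<integral>\<^sup>+b. ennreal (?G (nxt c i j x a b)) \<partial>measure_pmf (bernoulli_pmf p)) \<partial>measure_pmf (bernoulli_pmf p))"
      by (simp only: e rel0_shift IH nxt_cons)
    also have "\<dots> = ennreal (Pop c p ?G s)"
      by (simp only: nn_integral_bern[OF pl pu] ennreal_comb[OF pl pu Gnn Gnn]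
        ennreal_comb[OF pl pu ennreal_comb_nonneg[OF pl pu Gnn Gnn] ennreal_comb_nonneg[OF pl pu Gnn Gnn]] s Pop_def alg_state.case)
    finally show ?thesis by simp
  next
    case (Halt y pos)
    with Suc.prems have s: "s = Halt y 0" by simp
    have e: "\<And>\<omega>. (alg_step c \<omega> ^^ m) s = s" for m
      by (induction m) (auto simp: s)
    have "(\<integral>\<^sup>+\<omega>. ?K ((alg_step c \<omega> ^^ Suc n) s) \<partial>bern_seq p)
        = (\<integral>\<^sup>+\<omega>. ?K ((alg_step c \<omega> ^^ n) s) \<partial>bern_seq p)" by (simp only: e)
    also have "\<dots> = ennreal (?G s)" using IH[of s] s by simp
    also have "?G s = (Pop c p ^^ Suc n) \<phi> s"
      by (simp only: funpow.simps comp_def) (simp add: Pop_def s)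
    finally show ?thesis .
  qed
qed


lemma mono4:
  fixes p :: real
  assumes "0 \<le> p" "p \<le> 1" "a \<le> A" "b \<le> B" "c' \<le> C" "d \<le> D"
  shows "p * (p * a + (1-p) * b) + (1-p) * (p * c' + (1-p) * d) \<le> p * (p * A + (1-p) * B) + (1-p) * (p * C + (1-p) * D)"
proof -
  have "p * a + (1-p) * b \<le> p * A + (1-p) * B" using assms by (intro add_mono mult_left_mono) auto
  moreover have "p * c' + (1-p) * d \<le> p * C + (1-p) * D" using assms by (intro add_mono mult_left_mono) auto
  ultimately show ?thesis using assms by (intro add_mono mult_left_mono) auto
qed

lemma mono2:
  fixes p :: real
  assumes "0 \<le> p" "p \<le> 1" "a \<le> A" "b \<le> B"
  shows "p * a + (1-p) * b \<le> p * A + (1-p) * B"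
  using assms by (intro add_mono mult_left_mono) auto

definition goodK :: "(alg_state \<Rightarrow> real) \<Rightarrow> real \<Rightarrow> bool" where "goodK F K \<longleftrightarrow> (\<forall>t. 0 \<le> F t \<and> F t \<le> K) \<and> (\<forall>y. F (Halt y 0) = 0)"

lemma goodK_nonneg: "goodK F K \<Longrightarrow> 0 \<le> K"
proof -
  assume "goodK F K"
  then have "0 \<le> F undefined \<and> F undefined \<le> K" unfolding goodK_def by blast
  then show ?thesis by linarith
qed

lemma Pop_good:
  assumes p: "0 \<le> p" "p \<le> 1" and g: "goodK F K"
  shows "goodK (Pop c p F) K"
proof -
  have F: "\<And>t. 0 \<le> F t" "\<And>t. F t \<le> K" "\<And>y. F (Halt y 0) = 0" using g by (auto simp: goodK_def)
  have "Pop c p F t \<le> K" for t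
  proof (cases t)
    case (Start i pos)
    have "Pop c p F t \<le> p*K+(1-p)*K" unfolding Pop_def Start
      by (simp only: alg_state.case) (rule mono2[OF p F(2) F(2)])
    also have "\<dots> = K" by (simp add: algebra_simps)
    finally show ?thesis .
  next
    case (Gen i j x pos)
    have "Pop c p F t \<le> p*(p*K+(1-p)*K) + (1-p)*(p*K+(1-p)*K)" unfolding Pop_def Gen
      by (simp only: alg_state.case) (rule mono4[OF p F(2) F(2) F(2) F(2)])
    also have "\<dots> = K" by (simp add: algebra_simps)
    finally show ?thesis .
  next
    case (Halt y pos)
    then show ?thesis using F goodK_nonneg[OF g] by (simp add: Pop_def)
  qed
  then show ?thesis using Pop_nonneg[OF p F(1)] F(3) by (auto simp: goodK_def Pop_def)
qed

lemma Popn_good: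
  assumes p: "0 \<le> p" "p \<le> 1" and g: "goodK F K"
  shows "goodK ((Pop c p ^^ n) F) K"
  by (induction n) (auto intro: Pop_good[OF p] g)

lemma Pop_GenT:
  assumes p: "0 \<le> p" "p \<le> 1" and g: "goodK F K"
  shows "Pop c p F (Gen i j True pos) \<le> (1 - p*(1-p)) * K"
proof -
  have F: "\<And>t. 0 \<le> F t" "\<And>t. F t \<le> K" "\<And>y. F (Halt y 0) = 0" using g by (auto simp: goodK_def)
  have "Pop c p F (Gen i j True pos) = p*(p*F(Gen i j True 0) + (1-p)*0) + (1-p)*(p*F(Gen i (Suc j) True 0) + (1-p)*F(Gen i j True 0))"
    by (simp add: Pop_def nxt_def F(3))
  also have "\<dots> \<le> p * (p * K + (1-p) * 0) + (1-p) * (p * K + (1-p) * K)"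
    by (rule mono4[OF p]) (auto simp: F)
  also have "\<dots> = (1 - p*(1-p)) * K" by (simp add: algebra_simps)
  finally show ?thesis .
qed

lemma Pop_Start:
  assumes p: "0 \<le> p" "p \<le> 1" and g: "goodK F K" and T: "\<And>i j. F (Gen i j True 0) \<le> (1 - p*(1-p)) * K"
  shows "Pop c p F (Start i pos) \<le> (1 - p*(p*(1-p))) * K"
proof -
  have F: "\<And>t. 0 \<le> F t" "\<And>t. F t \<le> K" "\<And>y. F (Halt y 0) = 0" using g by (auto simp: goodK_def)
  have "Pop c p F (Start i pos) = p * F (Gen i 1 True 0) + (1-p) * F (Gen i 1 False 0)"
    by (simp add: Pop_def)
  also have "\<dots> \<le> p * ((1 - p*(1-p)) * K) + (1-p) * K"
    by (rule mono2[OF p T F(2)])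
  also have "\<dots> = (1 - p*(p*(1-p))) * K" by (simp add: algebra_simps)
  finally show ?thesis .
qed

lemma Pop_Gen3:
  assumes p: "0 \<le> p" "p \<le> 1" and g: "goodK F K" and S: "\<And>i. F (Start i 0) \<le> (1 - p*(p*(1-p))) * K"
  shows "Pop c p F (Gen i j x pos) \<le> (1 - p*(p*(1-p))^2) * K"
proof -
  have F: "\<And>t. 0 \<le> F t" "\<And>t. F t \<le> K" "\<And>y. F (Halt y 0) = 0" using g by (auto simp: goodK_def)
  have K0: "0 \<le> K" using goodK_nonneg[OF g] .
  have pr: "0 \<le> p*(p*(1-p))" "p*(p*(1-p)) \<le> 1" using p by (auto simp: mult_le_one)
  have "0 \<le> (1 - p*(p*(1-p))) * K" using pr K0 by auto
  then have "F (nxt c i j x True False) \<le> (1 - p*(p*(1-p))) * K"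
    using S F by (auto simp: nxt_def)
  then have "Pop c p F (Gen i j x pos) \<le> p * (p * K + (1-p) * ((1 - p*(p*(1-p))) * K)) + (1-p) * (p * K + (1-p) * K)"
    unfolding Pop_def alg_state.case by (rule mono4[OF p F(2) _ F(2) F(2)])
  also have "\<dots> = (1 - p*(p*(1-p))^2) * K" by (simp add: algebra_simps power2_eq_square)
  finally show ?thesis .
qed

lemma Pop3:
  fixes p :: real
  assumes p: "0 < p" "p < 1" and g: "goodK F K"
  shows "goodK (Pop c p (Pop c p (Pop c p F))) ((1 - p*(p*(1-p))^2) * K)"
proof -
  let ?r = "p*(1-p)" and ?g = "1 - p*(p*(1-p))^2"
  have pl: "0 \<le> p" "p \<le> 1" using p by auto
  have K0: "0 \<le> K" using goodK_nonneg[OF g] .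
  have r: "0 \<le> ?r" "?r \<le> 1" using p by (auto simp: mult_le_one)
  have g1: "goodK (Pop c p F) K" by (rule Pop_good[OF pl g])
  have g2: "goodK (Pop c p (Pop c p F)) K" by (rule Pop_good[OF pl g1])
  have T2: "\<And>i j. Pop c p (Pop c p F) (Gen i j True 0) \<le> (1 - ?r) * K"
    by (rule Pop_GenT[OF pl g1])
  have S2: "\<And>i. Pop c p (Pop c p F) (Start i 0) \<le> (1 - p*?r) * K"
    by (rule Pop_Start[OF pl g1]) (rule Pop_GenT[OF pl g])
  have S3: "Pop c p (Pop c p (Pop c p F)) (Start i pos) \<le> (1 - p*?r) * K" for i pos
    by (rule Pop_Start[OF pl g2 T2])
  have G3: "Pop c p (Pop c p (Pop c p F)) (Gen i j x pos) \<le> ?g * K" for i j x pos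
    by (rule Pop_Gen3[OF pl g2 S2])
  have "?r * ?r \<le> ?r * 1" by (rule mult_left_mono[OF r(2) r(1)])
  then have "p * ?r^2 \<le> p * ?r"
    using pl by (intro mult_left_mono) (auto simp: power2_eq_square)
  then have le: "(1 - p*?r) * K \<le> ?g * K" using K0 by (intro mult_right_mono) auto
  have g3: "goodK (Pop c p (Pop c p (Pop c p F))) K" by (rule Pop_good[OF pl g2])
  have "Pop c p (Pop c p (Pop c p F)) t \<le> ?g * K" for t
  proof (cases t)
    case (Start i pos) then show ?thesis using S3 le by (meson order.trans)
  next
    case (Gen i j x pos) then show ?thesis using G3 by simp
  next
    case (Halt y pos)
    have "Pop c p (Pop c p (Pop c p F)) t = 0" using g by (simp add: Halt Pop_def goodK_def)
    moreover have "0 \<le> ?g * K" using r pl K0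
      by (intro mult_nonneg_nonneg) (auto simp: power2_eq_square mult_le_one)
    ultimately show ?thesis by simp
  qed
  then show ?thesis using g3 by (auto simp: goodK_def)
qed

lemma Popn_decay:
  fixes p :: real
  assumes p: "0 < p" "p < 1" and g: "goodK F K"
  shows "goodK ((Pop c p ^^ n) F) ((1 - p*(p*(1-p))^2) ^ (n div 3) * K)"
proof -
  let ?g = "1 - p*(p*(1-p))^2"
  have pl: "0 \<le> p" "p \<le> 1" using p by auto
  have k: "goodK ((Pop c p ^^ (3*k)) F) (?g ^ k * K)" for k
  proof (induction k)
    case 0 then show ?case using g by simp
  next
    case (Suc k)
    have "(Pop c p ^^ (3 * Suc k)) F = Pop c p (Pop c p (Pop c p ((Pop c p ^^ (3*k)) F)))"
      by (simp add: funpow_add numeral_3_eq_3)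
    then show ?case using Pop3[OF p Suc] by (simp add: algebra_simps)
  qed
  have "n = n mod 3 + 3 * (n div 3)" by simp
  then have "(Pop c p ^^ n) F = (Pop c p ^^ (n mod 3)) ((Pop c p ^^ (3 * (n div 3))) F)"
    by (metis funpow_add comp_apply)
  then show ?thesis using Popn_good[OF pl k] by simp
qed


definition dig :: "(nat \<Rightarrow> real) \<Rightarrow> nat \<Rightarrow> nat \<Rightarrow> real" where
  "dig c i j = real_of_int (bin_digit (dcoef c i) j)"
definition tt :: "(nat \<Rightarrow> real) \<Rightarrow> nat \<Rightarrow> nat \<Rightarrow> real" where
  "tt c i j = (\<Sum>m. dig c i (j+m) / 2^(Suc m))"
definition rho :: "(nat \<Rightarrow> real) \<Rightarrow> real \<Rightarrow> nat \<Rightarrow> real" where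
  "rho c p i = (1-p) * (1 - tt c i 1)"
definition SS :: "(nat \<Rightarrow> real) \<Rightarrow> real \<Rightarrow> nat \<Rightarrow> real" where
  "SS c p i = (\<Sum>k. \<Prod>m<k. rho c p (i+m))"
definition hh :: "(nat \<Rightarrow> real) \<Rightarrow> real \<Rightarrow> alg_state \<Rightarrow> real" where
  "hh c p s = (case s of Start i _ \<Rightarrow> (1 + 2/(p*(1-p))) * SS c p i
     | Gen i j x _ \<Rightarrow> 2/(p*(1-p)) + (if x then 0 else (1 - tt c i j) * ((1 + 2/(p*(1-p))) * SS c p (Suc i)))
     | Halt _ _ \<Rightarrow> 0)"

fun costn :: "alg_state \<Rightarrow> nat" where
  "costn (Start _ _) = 1"
| "costn (Gen _ _ _ _) = 2"
| "costn (Halt _ _) = 0"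

lemma dig01: "dig c i j = 0 \<or> dig c i j = 1"
proof -
  have "bin_digit x j \<in> {0, 1}" for x
  proof -
    have "0 \<le> bin_digit x j" "bin_digit x j < 2" unfolding bin_digit_def by auto
    then show ?thesis by auto
  qed
  then show ?thesis unfolding dig_def by auto
qed

lemma dig_bounds: "0 \<le> dig c i j" "dig c i j \<le> 1"
  using dig01[of c i j] by auto

lemma tt_summable: "summable (\<lambda>m. dig c i (j+m) / 2^(Suc m))"
proof (rule summable_comparison_test[OF _ power_half_series[THEN sums_summable]])
  show "\<exists>N. \<forall>n\<ge>N. norm (dig c i (j + n) / 2 ^ Suc n) \<le> (1/2) ^ Suc n"
    using dig_bounds[of c i] by (auto simp: power_divide intro!: divide_right_mono)
qed

lemma tt_bounds: "0 \<le> tt c i j" "tt c i j \<le> 1"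
proof -
  show "0 \<le> tt c i j" unfolding tt_def
    by (rule suminf_nonneg[OF tt_summable]) (simp add: dig_bounds)
  have "tt c i j \<le> (\<Sum>m. (1/2::real)^Suc m)" unfolding tt_def
    by (rule suminf_le[OF _ tt_summable power_half_series[THEN sums_summable]])
       (auto simp: power_divide dig_bounds intro!: divide_right_mono)
  then show "tt c i j \<le> 1" using power_half_series[THEN sums_unique] by simp
qed

lemma tt_rec: "tt c i j = dig c i j / 2 + tt c i (Suc j) / 2"
proof -
  have "(\<Sum>m. dig c i (j + Suc m) / 2 ^ Suc (Suc m)) = tt c i j - dig c i j / 2"
    using suminf_split_head[OF tt_summable[of c i j]] unfolding tt_def by simp
  moreover have "(\<Sum>m. dig c i (j + Suc m) / 2 ^ Suc (Suc m)) = (\<Sum>m. dig c i (Suc j + m) / 2 ^ Suc m) / 2"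
    using suminf_divide[OF tt_summable[of c i "Suc j"], of 2] by (simp add: field_simps)
  ultimately show ?thesis unfolding tt_def by simp
qed

context
  fixes p :: real assumes p: "0 < p" "p < 1"
begin

lemma rho_bounds: "0 \<le> rho c p i" "rho c p i \<le> 1 - p"
  using tt_bounds[of c i 1] p unfolding rho_def by (auto simp: mult_le_cancel_left1 mult_left_le)

lemma prod_rho_bounds: "0 \<le> (\<Prod>m<k. rho c p (i+m))" "(\<Prod>m<k. rho c p (i+m)) \<le> (1-p)^k"
proof -
  show "0 \<le> (\<Prod>m<k. rho c p (i+m))" by (rule prod_nonneg) (simp add: rho_bounds)
  have "(\<Prod>m<k. rho c p (i+m)) \<le> (\<Prod>m<k. 1-p)"
    by (rule prod_mono) (simp add: rho_bounds)
  then show "(\<Prod>m<k. rho c p (i+m)) \<le> (1-p)^k" by simp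
qed

lemma SS_summable: "summable (\<lambda>k. \<Prod>m<k. rho c p (i+m))"
  by (rule summable_comparison_test[OF _ summable_geometric[of "1-p"]])
     (use p prod_rho_bounds in auto)

lemma SS_bounds: "0 \<le> SS c p i" "SS c p i \<le> 1/p"
proof -
  show "0 \<le> SS c p i" unfolding SS_def by (rule suminf_nonneg[OF SS_summable]) (simp add: prod_rho_bounds)
  have "SS c p i \<le> (\<Sum>k. (1-p)^k)" unfolding SS_def
    by (rule suminf_le[OF _ SS_summable summable_geometric]) (use p prod_rho_bounds in auto)
  also have "\<dots> = 1/p" using suminf_geometric[of "1-p"] p by simp
  finally show "SS c p i \<le> 1/p" .
qed

lemma SS_rec: "SS c p i = 1 + rho c p i * SS c p (Suc i)"
proof -
  have "(\<Sum>k. \<Prod>m<Suc k. rho c p (i+m)) = SS c p i - 1"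
    using suminf_split_head[OF SS_summable[of c i]] unfolding SS_def by simp
  moreover have "(\<Sum>k. \<Prod>m<Suc k. rho c p (i+m)) = rho c p i * SS c p (Suc i)"
  proof -
    have e: "\<And>k. (\<Prod>m<Suc k. rho c p (i+m)) = rho c p i * (\<Prod>m<k. rho c p (Suc i + m))"
      by (simp only: prod.lessThan_Suc_shift) simp
    show ?thesis
      unfolding SS_def e using suminf_mult[OF SS_summable[of c "Suc i"], of "rho c p i"] by simp
  qed
  ultimately show ?thesis by simp
qed

lemma hh_fix: "hh c p s = real (costn s) + Pop c p (hh c p) s"
proof (cases s)
  case (Start i pos)
  define a where "a = 2/(p*(1-p))"
  have r: "SS c p i = 1 + (1-p) * (1 - tt c i 1) * SS c p (Suc i)" using SS_rec[of c i] by (simp add: rho_def)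
  show ?thesis unfolding Start hh_def Pop_def alg_state.case a_def[symmetric] costn.simps
    by (simp add: r algebra_simps)
next
  case (Gen i j x pos)
  define a where "a = 2/(p*(1-p))"
  define U where "U = (1 + a) * SS c p (Suc i)"
  have pa: "p * (1-p) * a = 2" using p by (simp add: a_def)
  show ?thesis
  proof (cases x)
    case True
    have "2 + (p * (p * a + (1-p) * 0) + (1-p) * (p * a + (1-p) * a)) = 2 + a - p*(1-p)*a"
      by (simp add: algebra_simps)
    also have "\<dots> = a" using pa by simp
    finally have "2 + (p * (p * a + (1-p) * 0) + (1-p) * (p * a + (1-p) * a)) = a" .
    with True show ?thesis unfolding Gen hh_def Pop_def alg_state.case a_def[symmetric]
      by (simp add: nxt_def)
  next
    case False
    have tr: "tt c i j = dig c i j / 2 + tt c i (Suc j) / 2" by (rule tt_rec)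
    have key: "2 + (p * (p * (a + (1 - tt c i j) * U) + (1-p) * (if dig c i j = 1 then 0 else U))
       + (1-p) * (p * (a + (1 - tt c i (Suc j)) * U) + (1-p) * (a + (1 - tt c i j) * U)))
       = a + (1 - tt c i j) * U"
    proof (cases "dig c i j = 1")
      case True
      then have t1: "tt c i (Suc j) = 2 * tt c i j - 1" using tr by simp
      have "2 + (p * (p * (a + (1 - tt c i j) * U) + (1-p) * 0)
       + (1-p) * (p * (a + (1 - tt c i (Suc j)) * U) + (1-p) * (a + (1 - tt c i j) * U)))
        = 2 - p*(1-p)*a + a + (1 - tt c i j) * U"
        unfolding t1 by (simp add: algebra_simps)
      then show ?thesis using True pa by simp
    next
      case False
      then have "dig c i j = 0" using dig01 by blast
      then have t1: "tt c i (Suc j) = 2 * tt c i j" using tr by simp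
      have "2 + (p * (p * (a + (1 - tt c i j) * U) + (1-p) * U)
       + (1-p) * (p * (a + (1 - tt c i (Suc j)) * U) + (1-p) * (a + (1 - tt c i j) * U)))
        = 2 - p*(1-p)*a + a + (1 - tt c i j) * U"
        unfolding t1 by (simp add: algebra_simps)
      then show ?thesis using False pa by simp
    qed
    have dd: "(bin_digit (dcoef c i) j = 1) = (dig c i j = 1)" unfolding dig_def by simp
    show ?thesis using key False unfolding Gen hh_def Pop_def alg_state.case a_def[symmetric]
      unfolding U_def[symmetric]
      by (cases "dig c i j = 1") (simp_all add: nxt_def dd U_def)
  qed
next
  case (Halt y pos)
  then show ?thesis by (simp add: hh_def Pop_def)
qed

end

lemma Pop_add: "Pop c p (\<lambda>t. F t + G t) = (\<lambda>t. Pop c p F t + Pop c p G t)"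
  by (rule ext, simp add: Pop_def algebra_simps split: alg_state.split)

lemma Popn_add: "(Pop c p ^^ n) (\<lambda>t. F t + G t) = (\<lambda>t. (Pop c p ^^ n) F t + (Pop c p ^^ n) G t)"
  by (induction n) (simp_all add: Pop_add)

lemma geo_div:
  fixes g :: real assumes g: "0 < g" "g < 1" and d: "0 < d"
  shows "\<exists>A \<beta>. A > 0 \<and> 0 < \<beta> \<and> \<beta> < 1 \<and> (\<forall>n. g ^ (n div d) \<le> A * \<beta> ^ n)"
proof -
  define \<beta> where "\<beta> = root d g"
  have b: "0 < \<beta>" "\<beta> < 1" using g d unfolding \<beta>_def by (auto simp: real_root_lt_1_iff)
  have bd: "\<beta> ^ d = g" using g d unfolding \<beta>_def by simp
  show ?thesis
  proof (intro exI conjI allI)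
    show "0 < 1 / \<beta> ^ (d - 1)" using b by simp
    fix n
    have "n \<le> d * (n div d) + (d - 1)"
      using d by (metis add_le_cancel_left div_mult_mod_eq le_diff_conv mod_less_divisor less_Suc_eq_le Suc_pred' mult.commute add.commute)
    then have "\<beta> ^ (d * (n div d) + (d - 1)) \<le> \<beta> ^ n" using b by (intro power_decreasing) auto
    then have "g ^ (n div d) * \<beta> ^ (d - 1) \<le> \<beta> ^ n" by (simp add: power_add power_mult bd)
    then show "g ^ (n div d) \<le> 1 / \<beta> ^ (d - 1) * \<beta> ^ n" using b by (simp add: field_simps)
  qed (use b in auto)
qed

context
  fixes p :: real assumes p: "0 < p" "p < 1"
begin

definition "gam = 1 - p*(p*(1-p))^2"

lemma gam_eq: "gam = 1 - p*(p*(1-p))^2" unfolding gam_def ..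

lemma gam: "0 < gam" "gam < 1"
proof -
  have le: "p*(1-p) \<le> p" using p by (intro mult_left_le) auto
  have r1: "0 < p*(1-p)" using p by simp
  have r2: "p*(1-p) < 1" using le p by linarith
  from r1 r2 have r: "0 < p*(1-p)" "p*(1-p) < 1" by auto
  then have "(p*(1-p))^2 < 1" "0 < (p*(1-p))^2" by (auto simp: power_less_one_iff)
  then have "p*(p*(1-p))^2 < 1" "0 < p*(p*(1-p))^2"
    using mult_strict_mono[of p 1 "(p*(1-p))^2" 1] p by auto
  then show "0 < gam" "gam < 1" unfolding gam_def by auto
qed

definition "MM = 2/(p*(1-p)) + (1 + 2/(p*(1-p))) / p"

lemma hh_good: "goodK (hh c p) MM"
proof -
  have a: "0 \<le> 2/(p*(1-p))" using p by simp
  have b: "0 \<le> (1 + 2/(p*(1-p))) / p" using p by simp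
  have U: "0 \<le> (1 + 2/(p*(1-p))) * SS c p i" "(1 + 2/(p*(1-p))) * SS c p i \<le> (1 + 2/(p*(1-p))) / p" for i
  proof -
    show "0 \<le> (1 + 2/(p*(1-p))) * SS c p i" using SS_bounds[OF p, of c i] a by simp
    have "(1 + 2/(p*(1-p))) * SS c p i \<le> (1 + 2/(p*(1-p))) * (1/p)"
      using SS_bounds[OF p, of c i] a by (intro mult_left_mono) auto
    then show "(1 + 2/(p*(1-p))) * SS c p i \<le> (1 + 2/(p*(1-p))) / p" by simp
  qed
  have "0 \<le> hh c p t \<and> hh c p t \<le> MM" for t
  proof (cases t)
    case (Start i pos)
    have "hh c p t = (1 + 2/(p*(1-p))) * SS c p i" by (simp add: hh_def Start)
    then show ?thesis using U[of i] a unfolding MM_def by linarith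
  next
    case (Gen i j x pos)
    have t: "0 \<le> 1 - tt c i j" "1 - tt c i j \<le> 1" using tt_bounds[of c i j] by auto
    have "(1 - tt c i j) * ((1 + 2/(p*(1-p))) * SS c p (Suc i)) \<le> 1 * ((1 + 2/(p*(1-p))) / p)"
      using t U[of "Suc i"] by (intro mult_mono) auto
    moreover have "0 \<le> (1 - tt c i j) * ((1 + 2/(p*(1-p))) * SS c p (Suc i))"
      using t U[of "Suc i"] by simp
    ultimately show ?thesis using a b by (auto simp: hh_def MM_def Gen)
  next
    case (Halt y pos) then show ?thesis using a b by (simp add: hh_def MM_def)
  qed
  then show ?thesis by (simp add: goodK_def hh_def)
qed

abbreviation "costr \<equiv> (\<lambda>t. real (costn t))"

lemma hh_partial: "hh c p s = (\<Sum>k<n. (Pop c p ^^ k) costr s) + (Pop c p ^^ n) (hh c p) s"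
proof (induction n)
  case 0 then show ?case by simp
next
  case (Suc n)
  have e: "hh c p = (\<lambda>t. costr t + Pop c p (hh c p) t)" by (rule ext) (rule hh_fix[OF p])
  have "(Pop c p ^^ n) (hh c p) s = (Pop c p ^^ n) (\<lambda>t. costr t + Pop c p (hh c p) t) s"
    by (simp only: e[symmetric])
  also have "\<dots> = (Pop c p ^^ n) costr s + (Pop c p ^^ n) (Pop c p (hh c p)) s"
    by (simp only: Popn_add)
  also have "(Pop c p ^^ n) (Pop c p (hh c p)) = (Pop c p ^^ Suc n) (hh c p)"
    by (simp only: funpow_Suc_right comp_apply)
  finally have "(Pop c p ^^ n) (hh c p) s = (Pop c p ^^ n) costr s + (Pop c p ^^ Suc n) (hh c p) s" .
  then show ?case using Suc by simp
qed

lemma hh_sums: "(\<lambda>k. (Pop c p ^^ k) costr s) sums hh c p s"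
proof -
  obtain A \<beta> where Ab: "A > 0" "0 < \<beta>" "\<beta> < 1" "\<And>n. gam ^ (n div 3) \<le> A * \<beta> ^ n"
    using geo_div[OF gam, of 3] by auto
  have M0: "0 \<le> MM" using goodK_nonneg[OF hh_good] .
  have bnd: "0 \<le> (Pop c p ^^ n) (hh c p) s \<and> (Pop c p ^^ n) (hh c p) s \<le> A * MM * \<beta> ^ n" for n
  proof -
    have "goodK ((Pop c p ^^ n) (hh c p)) (gam ^ (n div 3) * MM)"
      unfolding gam_def by (rule Popn_decay[OF p hh_good])
    then have "0 \<le> (Pop c p ^^ n) (hh c p) s" "(Pop c p ^^ n) (hh c p) s \<le> gam ^ (n div 3) * MM"
      unfolding goodK_def by auto
    moreover have "gam ^ (n div 3) * MM \<le> A * \<beta> ^ n * MM" using Ab(4)[of n] M0 by (rule mult_right_mono)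
    moreover have "A * \<beta> ^ n * MM = A * MM * \<beta> ^ n" by (simp only: mult.assoc mult.commute[of MM])
    ultimately show ?thesis by linarith
  qed
  have "(\<lambda>n. A * MM * \<beta> ^ n) \<longlonglongrightarrow> A * MM * 0"
    by (intro tendsto_mult tendsto_const LIMSEQ_power_zero) (use Ab in auto)
  then have lim0: "(\<lambda>n. A * MM * \<beta> ^ n) \<longlonglongrightarrow> 0" by simp
  have "(\<lambda>n. (Pop c p ^^ n) (hh c p) s) \<longlonglongrightarrow> 0"
    by (rule tendsto_sandwich[OF _ _ tendsto_const lim0]) (use bnd in \<open>auto intro!: always_eventually\<close>)
  then have "(\<lambda>n. hh c p s - (Pop c p ^^ n) (hh c p) s) \<longlonglongrightarrow> hh c p s - 0"
    by (intro tendsto_diff tendsto_const)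
  moreover have "(\<lambda>n. hh c p s - (Pop c p ^^ n) (hh c p) s) = (\<lambda>n. \<Sum>k<n. (Pop c p ^^ k) costr s)"
    using hh_partial by (intro ext) (metis add_diff_cancel_right')
  ultimately show ?thesis unfolding sums_def by simp
qed

end

lemma consumed_step: "consumed (alg_step c \<omega> t) = consumed t + costn t"
  by (cases t) auto

lemma consumed_run: "consumed ((alg_step c \<omega> ^^ n) s) = consumed s + (\<Sum>k<n. costn ((alg_step c \<omega> ^^ k) s))"
  by (induction n) (auto simp: consumed_step)

lemma halt_run: "is_halt t \<Longrightarrow> (alg_step c \<omega> ^^ m) t = t"
proof (induction m)
  case (Suc m) then show ?case by (cases t) auto
qed simp

lemma halt_later: "is_halt ((alg_step c \<omega> ^^ n) s) \<Longrightarrow> n \<le> m \<Longrightarrow> (alg_step c \<omega> ^^ m) s = (alg_step c \<omega> ^^ n) s"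
proof -
  assume h: "is_halt ((alg_step c \<omega> ^^ n) s)" and nm: "n \<le> m"
  have "(alg_step c \<omega> ^^ m) s = (alg_step c \<omega> ^^ (m - n)) ((alg_step c \<omega> ^^ n) s)"
    using nm by (metis funpow_add comp_apply le_add_diff_inverse2)
  then show ?thesis using halt_run[OF h] by simp
qed

lemma costn_pos: "\<not> is_halt t \<Longrightarrow> 1 \<le> costn t"
  by (cases t) auto

lemma costn_le2: "costn t \<le> 2"
  by (cases t) auto

lemma costn_rel0[simp]: "costn (rel0 t) = costn t"
  by (cases t) auto

lemma is_halt_rel0[simp]: "is_halt (rel0 t) = is_halt t"
  by (cases t) auto

lemma consumed_mono: "n \<le> m \<Longrightarrow> consumed (alg_run c \<omega> n) \<le> consumed (alg_run c \<omega> m)"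
  unfolding alg_run_def consumed_run by (auto intro!: sum_mono2)

lemma consumed_le: "consumed (alg_run c \<omega> n) \<le> 2 * n"
proof -
  have "(\<Sum>k<n. costn ((alg_step c \<omega> ^^ k) (Start 1 0))) \<le> (\<Sum>k<n. 2)"
    by (rule sum_mono) (rule costn_le2)
  then show ?thesis unfolding alg_run_def consumed_run by simp
qed

lemma num_SUP: "ennreal_of_enat (num_inputs c \<omega>) = (SUP n. of_nat (consumed (alg_run c \<omega> n)))"
proof (cases "\<exists>n. is_halt (alg_run c \<omega> n)")
  case True
  define L where "L = (LEAST n. is_halt (alg_run c \<omega> n))"
  have hL: "is_halt (alg_run c \<omega> L)" unfolding L_def by (rule LeastI_ex[OF True])
  have num: "num_inputs c \<omega> = enat (consumed (alg_run c \<omega> L))"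
    using True unfolding num_inputs_def L_def by simp
  have "(SUP n. (of_nat (consumed (alg_run c \<omega> n)) :: ennreal)) = of_nat (consumed (alg_run c \<omega> L))"
  proof (rule antisym)
    show "(SUP n. (of_nat (consumed (alg_run c \<omega> n)) :: ennreal)) \<le> of_nat (consumed (alg_run c \<omega> L))"
    proof (rule SUP_least)
      fix n
      show "(of_nat (consumed (alg_run c \<omega> n)) :: ennreal) \<le> of_nat (consumed (alg_run c \<omega> L))"
      proof (cases "n \<le> L")
        case True then show ?thesis using consumed_mono[OF True] by simp
      next
        case False
        then have "alg_run c \<omega> n = alg_run c \<omega> L"
          using halt_later[where c=c and \<omega>=\<omega> and n=L and s="Start 1 0" and m=n] hL unfolding alg_run_def by simp
        then show ?thesis by simp
      qed
    qed
  qed (rule SUP_upper, simp)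
  then show ?thesis using num by simp
next
  case False
  then have num: "num_inputs c \<omega> = \<infinity>" unfolding num_inputs_def by simp
  have ge: "n \<le> consumed (alg_run c \<omega> n)" for n
  proof -
    have "(\<Sum>k<n. (1::nat)) \<le> (\<Sum>k<n. costn ((alg_step c \<omega> ^^ k) (Start 1 0)))"
      using False by (intro sum_mono costn_pos) (auto simp: alg_run_def)
    then show ?thesis unfolding alg_run_def consumed_run by simp
  qed
  have st: "(SUP n. (of_nat (consumed (alg_run c \<omega> n)) :: ennreal)) = top"
  proof (rule ccontr)
    assume "(SUP n. (of_nat (consumed (alg_run c \<omega> n)) :: ennreal)) \<noteq> top"
    then obtain n where n: "(SUP n. (of_nat (consumed (alg_run c \<omega> n)) :: ennreal)) < of_nat n"
      using ennreal_Ex_less_of_nat top.not_eq_extremum by blast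
    have "(of_nat n :: ennreal) \<le> of_nat (consumed (alg_run c \<omega> n))" using ge[of n] by simp
    also have "\<dots> \<le> (SUP n. (of_nat (consumed (alg_run c \<omega> n)) :: ennreal))" by (rule SUP_upper) simp
    finally show False using n by simp
  qed
  have "ennreal_of_enat (num_inputs c \<omega>) = top" using num by simp
  then show ?thesis using st by metis
qed

lemma space_bern[simp]: "space (bern_seq p) = UNIV"
  unfolding bern_seq_def by (simp add: space_PiM)

lemma prob_bern: "prob_space (bern_seq p)"
  unfolding bern_seq_def by (rule prob_space_PiM) (rule prob_space_measure_pmf)

context
  fixes p :: real assumes p: "0 < p" "p < 1"
begin

lemma expectation: "(\<integral>\<^sup>+ \<omega>. ennreal_of_enat (num_inputs c \<omega>) \<partial>bern_seq p) = ennreal (hh c p (Start 1 0))"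
proof -
  let ?s = "Start 1 0"
  have "(\<integral>\<^sup>+ \<omega>. ennreal_of_enat (num_inputs c \<omega>) \<partial>bern_seq p)
     = (\<integral>\<^sup>+ \<omega>. (SUP n. of_nat (consumed (alg_run c \<omega> n))) \<partial>bern_seq p)"
    by (simp only: num_SUP)
  also have "\<dots> = (SUP n. (\<integral>\<^sup>+ \<omega>. of_nat (consumed (alg_run c \<omega> n)) \<partial>bern_seq p))"
  proof (rule nn_integral_monotone_convergence_SUP)
    show "incseq (\<lambda>n \<omega>. (of_nat (consumed (alg_run c \<omega> n)) :: ennreal))"
      by (auto simp: incseq_def le_fun_def intro: consumed_mono)
    show "\<And>n. (\<lambda>\<omega>. (of_nat (consumed (alg_run c \<omega> n)) :: ennreal)) \<in> borel_measurable (bern_seq p)"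
      unfolding alg_run_def by (rule fun_run_meas) simp
  qed
  also have "\<dots> = (SUP n. ennreal (\<Sum>k<n. (Pop c p ^^ k) costr ?s))"
  proof (rule SUP_cong[OF refl])
    fix n
    have e: "(of_nat (consumed (alg_run c \<omega> n)) :: ennreal) = (\<Sum>k<n. ennreal (costr (rel0 ((alg_step c \<omega> ^^ k) ?s))))" for \<omega>
      unfolding alg_run_def consumed_run by (simp add: ennreal_of_nat_eq_real_of_nat)
    have "(\<integral>\<^sup>+ \<omega>. of_nat (consumed (alg_run c \<omega> n)) \<partial>bern_seq p)
        = (\<Sum>k<n. (\<integral>\<^sup>+ \<omega>. ennreal (costr (rel0 ((alg_step c \<omega> ^^ k) ?s))) \<partial>bern_seq p))"
      unfolding e by (rule nn_integral_sum) (rule fun_run_meas, simp)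
    also have "\<dots> = (\<Sum>k<n. ennreal ((Pop c p ^^ k) costr ?s))"
      by (rule sum.cong[OF refl], rule run_integral[OF p]) auto
    also have "\<dots> = ennreal (\<Sum>k<n. (Pop c p ^^ k) costr ?s)"
      using p by (intro sum_ennreal Popn_nonneg) auto
    finally show "(\<integral>\<^sup>+ \<omega>. of_nat (consumed (alg_run c \<omega> n)) \<partial>bern_seq p) = ennreal (\<Sum>k<n. (Pop c p ^^ k) costr ?s)" .
  qed
  also have "\<dots> = ennreal (hh c p ?s)"
  proof (rule LIMSEQ_unique)
    have nn: "\<And>k. 0 \<le> (Pop c p ^^ k) costr ?s" using p by (intro Popn_nonneg) auto
    show "(\<lambda>n. ennreal (\<Sum>k<n. (Pop c p ^^ k) costr ?s)) \<longlonglongrightarrow> (SUP n. ennreal (\<Sum>k<n. (Pop c p ^^ k) costr ?s))"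
      by (rule LIMSEQ_SUP) (auto simp: incseq_def nn[simplified] intro!: ennreal_leI sum_mono2)
    show "(\<lambda>n. ennreal (\<Sum>k<n. (Pop c p ^^ k) costr ?s)) \<longlonglongrightarrow> ennreal (hh c p ?s)"
      using hh_sums[OF p, of c ?s] unfolding sums_def by (rule tendsto_ennrealI)
  qed
  finally show ?thesis .
qed

lemma tail: "measure (bern_seq p) {\<omega>. num_inputs c \<omega> > enat n} \<le> gam p ^ (n div 6)"
proof -
  interpret prob_space "bern_seq p" by (rule prob_bern)
  let ?m = "n div 2"
  let ?nh = "\<lambda>t. if is_halt t then 0 else (1::real)"
  define B where "B = {\<omega>. \<not> is_halt (alg_run c \<omega> ?m)}"
  have sub: "{\<omega>. num_inputs c \<omega> > enat n} \<subseteq> B"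
  proof
    fix \<omega> assume a: "\<omega> \<in> {\<omega>. num_inputs c \<omega> > enat n}"
    show "\<omega> \<in> B"
    proof (rule ccontr)
      assume "\<omega> \<notin> B"
      then have hm: "is_halt (alg_run c \<omega> ?m)" unfolding B_def by simp
      then have ex: "\<exists>k. is_halt (alg_run c \<omega> k)" by blast
      define L where "L = (LEAST k. is_halt (alg_run c \<omega> k))"
      have hL: "is_halt (alg_run c \<omega> L)" unfolding L_def by (rule LeastI_ex[OF ex])
      have Lm: "L \<le> ?m" unfolding L_def by (rule Least_le) (rule hm)
      have "alg_run c \<omega> ?m = alg_run c \<omega> L"
        using halt_later[where c=c and \<omega>=\<omega> and n=L and s="Start 1 0" and m="?m"] hL Lm unfolding alg_run_def by simp
      then have "num_inputs c \<omega> = enat (consumed (alg_run c \<omega> ?m))"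
        using ex unfolding num_inputs_def L_def by simp
      moreover have "consumed (alg_run c \<omega> ?m) \<le> n" using consumed_le[of c \<omega> ?m] by simp
      ultimately show False using a by simp
    qed
  qed
  have Bs: "B \<in> sets (bern_seq p)"
  proof -
    have "(\<lambda>\<omega>. alg_run c \<omega> ?m) -` {t. \<not> is_halt t} \<inter> space (bern_seq p) \<in> sets (bern_seq p)"
      by (rule measurable_sets[OF run_meas[where c=c and n="?m" and s="Start 1 0" and p=p, folded alg_run_def]]) simp
    then show ?thesis by (simp add: B_def vimage_def)
  qed
  have "emeasure (bern_seq p) B = (\<integral>\<^sup>+ \<omega>. ennreal (?nh (rel0 ((alg_step c \<omega> ^^ ?m) (Start 1 0)))) \<partial>bern_seq p)"
    by (subst nn_integral_indicator[OF Bs, symmetric])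
       (rule nn_integral_cong, simp add: B_def alg_run_def indicator_def)
  also have "\<dots> = ennreal ((Pop c p ^^ ?m) ?nh (Start 1 0))"
    by (rule run_integral[OF p]) auto
  finally have eB: "measure (bern_seq p) B = (Pop c p ^^ ?m) ?nh (Start 1 0)"
    unfolding measure_def using p by (simp add: Popn_nonneg)
  have g1: "goodK ?nh 1" unfolding goodK_def by auto
  have "goodK ((Pop c p ^^ ?m) ?nh) (gam p ^ (?m div 3) * 1)"
    unfolding gam_eq[OF p] by (rule Popn_decay[OF p g1])
  then have "(Pop c p ^^ ?m) ?nh (Start 1 0) \<le> gam p ^ (n div 6)"
    unfolding goodK_def by (simp add: div_mult2_eq[symmetric])
  moreover have "measure (bern_seq p) {\<omega>. num_inputs c \<omega> > enat n} \<le> measure (bern_seq p) B"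
    by (rule finite_measure_mono[OF sub Bs])
  ultimately show ?thesis using eB by simp
qed

end

lemma ceil_double: "\<lceil>2 * y\<rceil> = 2 * \<lceil>y\<rceil> - 1 \<or> \<lceil>2 * y\<rceil> = 2 * \<lceil>y\<rceil>" for y :: real
proof -
  have a: "real_of_int \<lceil>y\<rceil> - 1 < y" "y \<le> real_of_int \<lceil>y\<rceil>" by linarith+
  have "\<lceil>2 * y\<rceil> \<le> 2 * \<lceil>y\<rceil>" using a by (simp add: ceiling_le_iff)
  moreover have "2 * \<lceil>y\<rceil> - 1 \<le> \<lceil>2 * y\<rceil>"
  proof -
    have "real_of_int (2 * \<lceil>y\<rceil> - 2) < 2 * y" using a by simp
    then have "2 * \<lceil>y\<rceil> - 2 < \<lceil>2 * y\<rceil>" by (meson le_less_trans less_ceiling_iff order_refl)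
    then show ?thesis by simp
  qed
  ultimately show ?thesis by linarith
qed

lemma bin_expansion:
  fixes x :: real assumes x: "0 \<le> x" "x \<le> 1"
  shows "(\<lambda>m. real_of_int (bin_digit x (Suc m)) / 2 ^ Suc m) sums x"
proof (cases "x = 0")
  case True
  then show ?thesis by (simp add: bin_digit_def)
next
  case False
  then have xp: "0 < x" using x by simp
  define g where "g j = \<lceil>2 ^ j * x\<rceil> - 1" for j :: nat
  have g0: "g 0 = 0" using xp x unfolding g_def by (simp add: ceiling_eq_iff)
  have gs: "g (Suc j) = 2 * g j + bin_digit x (Suc j)" for j
  proof -
    have e: "2 ^ Suc j * x = 2 * (2 ^ j * x)" by simp
    have bd: "bin_digit x (Suc j) = g (Suc j) mod 2" using xp unfolding bin_digit_def g_def by simp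
    have "g (Suc j) = 2 * g j \<or> g (Suc j) = 2 * g j + 1"
      using ceil_double[of "2 ^ j * x"] unfolding g_def e by auto
    then show ?thesis unfolding bd by auto
  qed
  have ps: "(\<Sum>m<n. real_of_int (bin_digit x (Suc m)) / 2 ^ Suc m) = real_of_int (g n) / 2 ^ n" for n
  proof (induction n)
    case 0 then show ?case using g0 by simp
  next
    case (Suc n) then show ?case by (simp add: gs field_simps)
  qed
  have lo: "x - 1 / 2 ^ n \<le> real_of_int (g n) / 2 ^ n" for n :: nat
  proof -
    have h: "2 ^ n * x - 1 \<le> real_of_int (g n)" unfolding g_def by linarith
    have "x - 1 / 2 ^ n = (2 ^ n * x - 1) / 2 ^ n" by (simp add: field_simps)
    also have "\<dots> \<le> real_of_int (g n) / 2 ^ n" by (rule divide_right_mono[OF h]) simp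
    finally show ?thesis .
  qed
  have hi: "real_of_int (g n) / 2 ^ n \<le> x" for n :: nat
  proof -
    have "real_of_int (g n) \<le> 2 ^ n * x" unfolding g_def by linarith
    then show ?thesis by (simp add: field_simps)
  qed
  have "(\<lambda>n. x - 1 / 2 ^ n) \<longlonglongrightarrow> x - 0"
    by (intro tendsto_diff tendsto_const) (simp add: LIMSEQ_inverse_realpow_zero divide_inverse)
  then have l1: "(\<lambda>n. x - 1 / 2 ^ n) \<longlonglongrightarrow> x" by simp
  have "(\<lambda>n. real_of_int (g n) / 2 ^ n) \<longlonglongrightarrow> x"
    by (rule tendsto_sandwich[OF _ _ l1 tendsto_const]) (use lo hi in \<open>auto intro!: always_eventually\<close>)
  then show ?thesis unfolding sums_def ps .
qed

context
  fixes c :: "nat \<Rightarrow> real"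
  assumes c_nonneg: "\<And>k. k \<ge> 1 \<Longrightarrow> c k \<ge> 0"
    and c_sum: "(\<lambda>k. c (Suc k)) sums 1"
begin

definition "CC k = (\<Sum>j<k. c (Suc j))"

lemma CC_le: "CC k \<le> 1"
  unfolding CC_def using sum_le_suminf[OF sums_summable[OF c_sum], of "{..<k}"] c_nonneg c_sum
  by (auto simp: sums_iff)

lemma CC_Suc: "CC (Suc k) = CC k + c (Suc k)"
  unfolding CC_def by simp

lemma den_eq: "1 - (\<Sum>j\<in>{1..<Suc k}. c j) = 1 - CC k"
proof -
  have "(\<Sum>j\<in>{Suc 0..<Suc k}. c j) = (\<Sum>j\<in>{0..<k}. c (Suc j))" by (rule sum.shift_bounds_Suc_ivl)
  then show ?thesis unfolding CC_def by (simp add: atLeast0LessThan)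
qed

lemma dcoef_bounds: "0 \<le> dcoef c (Suc k)" "dcoef c (Suc k) \<le> 1"
proof -
  have ck: "0 \<le> c (Suc k)" by (rule c_nonneg) simp
  have le: "c (Suc k) \<le> 1 - CC k" using CC_le[of "Suc k"] CC_Suc[of k] by simp
  show "0 \<le> dcoef c (Suc k)" unfolding dcoef_def den_eq using ck le by simp
  show "dcoef c (Suc k) \<le> 1" unfolding dcoef_def den_eq using ck le
    by (cases "1 - CC k = 0") (auto simp: divide_le_eq_1)
qed

lemma tt_dcoef: "tt c (Suc k) 1 = dcoef c (Suc k)"
proof -
  have "(\<lambda>m. real_of_int (bin_digit (dcoef c (Suc k)) (Suc m)) / 2 ^ Suc m) sums dcoef c (Suc k)"
    by (rule bin_expansion[OF dcoef_bounds])
  then show ?thesis unfolding tt_def dig_def by (simp add: sums_iff)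
qed

lemma prod_R: "(\<Prod>m<k. 1 - dcoef c (Suc m)) = 1 - CC k"
proof (induction k)
  case 0 then show ?case by (simp add: CC_def)
next
  case (Suc k)
  have ck: "0 \<le> c (Suc k)" by (rule c_nonneg) simp
  have le: "c (Suc k) \<le> 1 - CC k" using CC_le[of "Suc k"] CC_Suc[of k] by simp
  have d: "dcoef c (Suc k) = c (Suc k) / (1 - CC k)" unfolding dcoef_def den_eq ..
  have "(\<Prod>m<Suc k. 1 - dcoef c (Suc m)) = (1 - CC k) * (1 - c (Suc k) / (1 - CC k))"
    by (simp only: prod.lessThan_Suc Suc.IH d)
  also have "\<dots> = 1 - CC (Suc k)"
  proof (cases "1 - CC k = 0")
    case True
    then have "c (Suc k) = 0" using ck le by simp
    then show ?thesis using True by (simp add: CC_Suc)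
  next
    case False
    then show ?thesis by (simp add: CC_Suc field_simps)
  qed
  finally show ?case .
qed

context
  fixes p :: real assumes p: "0 < p" "p < 1"
begin

lemma SS_1: "SS c p 1 = (\<Sum>k. (1-p)^k * (1 - CC k))"
proof -
  have "(\<Prod>m<k. rho c p (1+m)) = (1-p)^k * (1 - CC k)" for k
  proof -
    have "(\<Prod>m<k. rho c p (1+m)) = (\<Prod>m<k. (1-p) * (1 - dcoef c (Suc m)))"
      unfolding rho_def by (simp add: tt_dcoef[simplified])
    also have "\<dots> = (1-p)^k * (1 - CC k)" by (simp add: prod.distrib prod_R)
    finally show ?thesis .
  qed
  then show ?thesis unfolding SS_def by simp
qed

lemma SS_1_closed: "p * SS c p 1 = 1 - (\<Sum>k. c (Suc k) * (1 - p) ^ Suc k)"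
proof -
  let ?s = "1 - p"
  let ?R = "\<lambda>k. 1 - CC k"
  have R: "0 \<le> ?R k" "?R k \<le> 1" for k
  proof -
    show "0 \<le> ?R k" using CC_le[of k] by simp
    have "0 \<le> CC k" unfolding CC_def by (intro sum_nonneg c_nonneg) simp
    then show "?R k \<le> 1" by simp
  qed
  have sX: "summable (\<lambda>k. ?s^k * ?R k)"
    by (rule summable_comparison_test[OF _ summable_geometric[of ?s]])
       (use p R in \<open>auto intro!: mult_left_le simp: abs_mult\<close>)
  have sF: "summable (\<lambda>k. c (Suc k) * ?s ^ Suc k)"
  proof (rule summable_comparison_test[OF _ sums_summable[OF c_sum]])
    have "c (Suc k) * ?s ^ Suc k \<le> c (Suc k)" for k
    proof -
      have "?s ^ Suc k \<le> 1" using p by (intro power_le_one) auto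
      then show ?thesis using c_nonneg[of "Suc k"] by (intro mult_left_le) auto
    qed
    then show "\<exists>N. \<forall>n\<ge>N. norm (c (Suc n) * ?s ^ Suc n) \<le> c (Suc n)"
      using p c_nonneg by (auto simp: abs_mult)
  qed
  define X where "X = (\<Sum>k. ?s^k * ?R k)"
  define F where "F = (\<Sum>k. c (Suc k) * ?s ^ Suc k)"
  have "(\<Sum>k. ?s^Suc k * ?R (Suc k)) = X - 1"
    using suminf_split_head[OF sX] unfolding X_def by (simp add: CC_def)
  moreover have "(\<Sum>k. ?s^Suc k * ?R (Suc k)) = (\<Sum>k. ?s * (?s^k * ?R k) - c (Suc k) * ?s ^ Suc k)"
    by (simp add: CC_Suc algebra_simps)
  moreover have "\<dots> = ?s * X - F"
    unfolding X_def F_def using suminf_diff[OF summable_mult[OF sX, of ?s] sF] suminf_mult[OF sX, of ?s]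
    by simp
  ultimately have "X - 1 = ?s * X - F" by simp
  then have "p * X = 1 - F" by (simp add: algebra_simps)
  then show ?thesis using SS_1 unfolding X_def F_def by simp
qed

end
end


theorem theorem5:
  fixes c :: "nat \<Rightarrow> real" and f :: "real \<Rightarrow> real" and p :: real
  assumes c_nonneg: "\<And>k. k \<ge> 1 \<Longrightarrow> c k \<ge> 0"
    and c_sum: "(\<lambda>k. c (Suc k)) sums 1"
    and f_form: "\<And>q. q \<in> {0<..<1} \<Longrightarrow> f q = 1 - (\<Sum>k. c (Suc k) * (1 - q) ^ Suc k)"
    and f_range: "f ` {0<..<1} \<subseteq> {0<..<1}"
    and p: "0 < p" "p < 1"
  shows "(\<integral>\<^sup>+ \<omega>. ennreal_of_enat (num_inputs c \<omega>) \<partial>bern_seq p)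
           = ennreal (f p / p * (1 + 2 / (p * (1 - p))))
         \<and> (\<exists>A \<beta>. A > 0 \<and> 0 < \<beta> \<and> \<beta> < 1 \<and>
           (\<forall>n::nat. measure (bern_seq p) {\<omega>. num_inputs c \<omega> > enat n} \<le> A * \<beta> ^ n))"
proof
  have fp: "f p = 1 - (\<Sum>k. c (Suc k) * (1 - p) ^ Suc k)" using p by (intro f_form) auto
  have "p * SS c p 1 = f p" using SS_1_closed[OF c_nonneg c_sum p] fp by simp
  then have S: "SS c p 1 = f p / p" using p by (simp add: field_simps)
  have "hh c p (Start 1 0) = f p / p * (1 + 2 / (p * (1 - p)))"
    unfolding hh_def alg_state.case S by (rule mult.commute)
  then show "(\<integral>\<^sup>+ \<omega>. ennreal_of_enat (num_inputs c \<omega>) \<partial>bern_seq p)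
           = ennreal (f p / p * (1 + 2 / (p * (1 - p))))"
    using expectation[OF p, of c] by simp
next
  obtain A \<beta> where Ab: "A > 0" "0 < \<beta>" "\<beta> < 1" "\<And>n. gam p ^ (n div 6) \<le> A * \<beta> ^ n"
    using geo_div[OF gam[OF p], of 6] by auto
  show "\<exists>A \<beta>. A > 0 \<and> 0 < \<beta> \<and> \<beta> < 1 \<and>
           (\<forall>n::nat. measure (bern_seq p) {\<omega>. num_inputs c \<omega> > enat n} \<le> A * \<beta> ^ n)"
  proof (intro exI conjI allI)
    fix n :: nat
    show "measure (bern_seq p) {\<omega>. num_inputs c \<omega> > enat n} \<le> A * \<beta> ^ n"
      using tail[OF p, where c=c and n=n] Ab(4)[of n] by linarith
  qed (use Ab in auto)
qed

end
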